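(* Consider the general additive Gaussian noise model: $Y = X + Z$ where $X \in \mathbb{R}^N$ is drawn from an arbitrary known prior (with all moments finite), $Z \in \mathbb{R}^N$ has i.i.d. $\mathcal{N}(0,1)$ entries independent of $X$, and $x \in \mathbb{R}$ is a scalar function of $X$ (with all joint moments with $X$ finite) to be estimated. Then for every integer $D \ge 0$, \[ \mathrm{Corr}_{\le D}^2 \le \sum_{\alpha \in \mathbb{N}^N,\ 0 \le |\alpha| \le D} \frac{\kappa_\alpha^2}{\alpha!}, \] where $\kappa_\alpha$ for $\alpha \in \mathbb{N}^N$ is defined recursively by \[ \kappa_\alpha = \mathbb{E}[x X^\alpha] - \sum_{0 \le \beta \lneq \alpha} \kappa_\beta \binom{\alpha}{\beta} \mathbb{E}[X^{\alpha-\beta}] \] (so in particular $\kappa_0 = \mathbb{E}[x]$).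
   Context: $\mathbb{N}=\{0,1,2,\dots\}$. For $\alpha \in \mathbb{N}^N$: $|\alpha| = \sum_i \alpha_i$, $\alpha! = \prod_i \alpha_i!$, $X^\alpha = \prod_i X_i^{\alpha_i}$; $\beta \le \alpha$ means $\beta_i \le \alpha_i$ for all $i$; $\beta \lneq \alpha$ means $\beta\le\alpha$ and $\beta\ne\alpha$; $\binom{\alpha}{\beta} = \prod_i \binom{\alpha_i}{\beta_i}$; $\alpha-\beta$ is entrywise. For an observation $Y$ and scalar target $x$ with joint law $\mathbb{P}$, the degree-$D$ maximum correlation is $\mathrm{Corr}_{\le D} = \sup\{ \mathbb{E}[f(Y)x]/\sqrt{\mathbb{E}[f(Y)^2]} : f \in \mathbb{R}[Y]_{\le D},\ \mathbb{E}[f(Y)^2]\neq 0\}$, where $\mathbb{R}[Y]_{\le D}$ is the space of real polynomials of degree at most $D$ in the coordinates of $Y$ and all expectations are over $\mathbb{P}$. The degree-$D$ minimum mean squared error is $\mathrm{MMSE}_{\le D} = \inf_{f \in \mathbb{R}[Y]_{\le D}} \mathbb{E}(f(Y)-x)^2$, and $\mathrm{MMSE}_{\le D} = \mathbb{E}[x^2] - \mathrm{Corr}_{\le D}^2$. *)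

theory Defs
  imports "HOL-Probability.Probability"
begin

(* Multi-indices alpha in N^N are functions 'n => nat over a finite index type 'n (|'n| = N). *)

definition mfact :: "('n::finite \<Rightarrow> nat) \<Rightarrow> real" where
  "mfact \<alpha> = (\<Prod>i\<in>UNIV. fact (\<alpha> i))"

definition mbinom :: "('n::finite \<Rightarrow> nat) \<Rightarrow> ('n \<Rightarrow> nat) \<Rightarrow> real" where
  "mbinom \<alpha> \<beta> = (\<Prod>i\<in>UNIV. real (\<alpha> i choose \<beta> i))"

definition mdeg :: "('n::finite \<Rightarrow> nat) \<Rightarrow> nat" where
  "mdeg \<alpha> = (\<Sum>i\<in>UNIV. \<alpha> i)"

definition monom :: "('n::finite \<Rightarrow> nat) \<Rightarrow> ('n \<Rightarrow> real) \<Rightarrow> real" where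
  "monom \<alpha> y = (\<Prod>i\<in>UNIV. y i ^ \<alpha> i)"

(* kappa_alpha = mx alpha - sum_{0 <= beta < alpha} kappa_beta * binom(alpha,beta) * m(alpha - beta),
   where mx alpha = E[x X^alpha] and m gamma = E[X^gamma]. *)
function kappa :: "(('n::finite \<Rightarrow> nat) \<Rightarrow> real) \<Rightarrow> (('n \<Rightarrow> nat) \<Rightarrow> real) \<Rightarrow> ('n \<Rightarrow> nat) \<Rightarrow> real" where
  "kappa m mx \<alpha> = mx \<alpha> -
     (\<Sum>\<beta>\<in>{\<beta>. \<beta> \<le> \<alpha> \<and> \<beta> \<noteq> \<alpha>}. kappa m mx \<beta> * mbinom \<alpha> \<beta> * m (\<lambda>i. \<alpha> i - \<beta> i))"
  by auto
termination
proof (relation "Wellfounded.measure (\<lambda>(m, mx, \<alpha>). mdeg \<alpha>)")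
  show "wf (Wellfounded.measure (\<lambda>(m, mx, \<alpha>). mdeg \<alpha>))" by simp
next
  fix m mx and \<alpha> \<beta> :: "'n::finite \<Rightarrow> nat"
  assume "\<beta> \<in> {\<beta>. \<beta> \<le> \<alpha> \<and> \<beta> \<noteq> \<alpha>}"
  then have le: "\<And>i. \<beta> i \<le> \<alpha> i" and ne: "\<exists>i. \<beta> i < \<alpha> i"
    by (auto simp: le_fun_def fun_eq_iff intro: le_neq_implies_less)
  have "mdeg \<beta> < mdeg \<alpha>" unfolding mdeg_def
    using ne le by (intro sum_strict_mono_ex1) auto
  then show "((m, mx, \<beta>), m, mx, \<alpha>) \<in> Wellfounded.measure (\<lambda>(m, mx, \<alpha>). mdeg \<alpha>)" by simp
qed

declare kappa.simps [simp del]

definition polys_le :: "nat \<Rightarrow> (('n::finite \<Rightarrow> real) \<Rightarrow> real) set" where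
  "polys_le D = {f. \<exists>c. \<forall>y. f y = (\<Sum>\<alpha>\<in>{\<alpha>. mdeg \<alpha> \<le> D}. c \<alpha> * monom \<alpha> y)}"

(* Degree-D maximum correlation (as an extended real, so that the supremum is always meaningful) *)
definition corr_le :: "'a measure \<Rightarrow> ('a \<Rightarrow> 'n::finite \<Rightarrow> real) \<Rightarrow> ('a \<Rightarrow> real) \<Rightarrow> nat \<Rightarrow> ereal" where
  "corr_le M Y x D =
     (SUP f\<in>{f\<in>polys_le D. (\<integral>\<omega>. (f (Y \<omega>))\<^sup>2 \<partial>M) \<noteq> 0}.
        ereal ((\<integral>\<omega>. f (Y \<omega>) * x \<omega> \<partial>M) / sqrt (\<integral>\<omega>. (f (Y \<omega>))\<^sup>2 \<partial>M)))"

end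

theory Submission
  imports Defs "HOL-Computational_Algebra.Polynomial"
begin


fun He :: "nat \<Rightarrow> real poly" where
  "He 0 = 1"
| "He (Suc 0) = [:0,1:]"
| "He (Suc (Suc n)) = pCons 0 (He (Suc n)) - smult (real (Suc n)) (He n)"

lemma pderiv_He: "pderiv (He (Suc n)) = smult (real (Suc n)) (He n)"
proof (induction n rule: less_induct)
  case (less n)
  show ?case
  proof (cases n)
    case 0 then show ?thesis by (simp add: pderiv_pCons)
  next
    case (Suc m)
    show ?thesis
    proof (cases m)
      case 0
      then show ?thesis using Suc by (simp add: pderiv_pCons pderiv_diff pderiv_smult algebra_simps)
    next
      case (Suc k)
      have IH: "pderiv (He (Suc k)) = smult (real (Suc k)) (He k)" using less Suc \<open>n = Suc m\<close> by simp
      have "pderiv (He (Suc n)) = He (Suc m) + pCons 0 (smult (real (Suc m)) (He m)) - smult (real (Suc m)) (pderiv (He m))"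
        using \<open>n = Suc m\<close> less[of m] by (simp add: pderiv_pCons pderiv_diff pderiv_smult)
      also have "\<dots> = He (Suc m) + smult (real (Suc m)) (He (Suc m))"
        using IH Suc by (simp add: algebra_simps smult_add_right smult_diff_right)
      also have "\<dots> = smult (1 + real (Suc m)) (He (Suc m))"
        by (simp only: smult_add_left smult_1_left)
      finally show ?thesis using \<open>n = Suc m\<close> by (simp add: algebra_simps)
    qed
  qed
qed

lemma degree_He: "degree (He n) = n \<and> coeff (He n) n = 1"
proof (induction n rule: less_induct)
  case (less n)
  show ?case
  proof (cases n)
    case 0 then show ?thesis by simp
  next
    case (Suc m)
    show ?thesis
    proof (cases m)
      case 0 then show ?thesis using Suc by simp
    next
      case (Suc k)
      have a: "degree (He (Suc k)) = Suc k" "coeff (He (Suc k)) (Suc k) = 1" "degree (He k) = k"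
        using less \<open>n = Suc m\<close> Suc by auto
      have ne: "He (Suc k) \<noteq> 0" using a by auto
      have d1: "degree (pCons 0 (He (Suc k))) = Suc (Suc k)" using ne a by simp
      have d2: "degree (smult (real (Suc k)) (He k)) < Suc (Suc k)" using a by simp
      have "degree (He n) = Suc (Suc k)"
        using \<open>n = Suc m\<close> Suc degree_add_eq_left[of "- smult (real (Suc k)) (He k)" "pCons 0 (He (Suc k))"] d1 d2
        by simp
      moreover have "coeff (He n) n = 1"
        using \<open>n = Suc m\<close> Suc a coeff_eq_0[of "He k" "Suc (Suc k)"] by simp
      ultimately show ?thesis using \<open>n = Suc m\<close> Suc by simp
    qed
  qed
qed


definition gm :: "nat \<Rightarrow> real" where "gm k = (\<integral>x. std_normal_density x * x ^ k \<partial>lborel)"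

lemma gm_0: "gm 0 = 1"
  using integral_std_normal_moment_even[of 0] by (simp add: gm_def)

lemma gm_1: "gm (Suc 0) = 0"
  using integral_std_normal_moment_odd[of 0] by (simp add: gm_def)

lemma gm_SS: "gm (Suc (Suc k)) = real (Suc k) * gm k"
proof (cases "even k")
  case True
  then obtain j where k: "k = 2 * j" by (auto elim: evenE)
  have e1: "gm (Suc (Suc k)) = fact (2 * Suc j) / (2 ^ Suc j * fact (Suc j))"
    using integral_std_normal_moment_even[of "Suc j"] k by (simp add: gm_def)
  have e2: "gm k = fact (2 * j) / (2 ^ j * fact j)"
    using integral_std_normal_moment_even[of j] k by (simp add: gm_def)
  have f1: "(fact (2 * Suc j) :: real) = (2 * real j + 2) * (2 * real j + 1) * fact (2 * j)"
    by (simp add: fact_Suc algebra_simps)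
  have f2: "(fact (Suc j) :: real) = (real j + 1) * fact j"
    by (simp add: algebra_simps)
  have "gm (Suc (Suc k)) = (2 * real j + 2) * (2 * real j + 1) * fact (2 * j) / (2 * 2 ^ j * ((real j + 1) * fact j))"
    using e1 by (simp only: f1 f2 power_Suc)
  also have "\<dots> = (2 * real j + 1) * (fact (2 * j) / (2 ^ j * fact j))"
  proof -
    have "(2 * real j + 2) * (2 * real j + 1) * (fact (2 * j)::real) = (2 * (real j + 1)) * ((2 * real j + 1) * fact (2 * j))" by (simp add: algebra_simps)
    moreover have "(2 * 2 ^ j * ((real j + 1) * fact j)) = (2 * (real j + 1)) * (2 ^ j * (fact j::real))" by (simp add: algebra_simps)
    ultimately show ?thesis by (simp only: mult_divide_mult_cancel_left_if) simp
  qed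
  finally show ?thesis using e2 k by simp
next
  case False
  then obtain j where k: "k = 2 * j + 1" using oddE by blast
  have e1: "gm (Suc (Suc k)) = 0"
    using integral_std_normal_moment_odd[of "Suc j"] k by (simp add: gm_def)
  have e2: "gm k = 0"
    using integral_std_normal_moment_odd[of j] k by (simp add: gm_def)
  show ?thesis using e1 e2 by simp
qed

lemma gm_Suc: "gm (Suc k) = real k * gm (k - 1)"
  by (cases k) (simp_all add: gm_1 gm_SS)

definition GE :: "real poly \<Rightarrow> real" where
  "GE p = (\<integral>x. std_normal_density x * poly p x \<partial>lborel)"

lemma GE_integrable: "integrable lborel (\<lambda>x. std_normal_density x * poly p x)"
proof -
  have "(\<lambda>x. std_normal_density x * poly p x) = (\<lambda>x. \<Sum>i\<le>degree p. coeff p i * (std_normal_density x * x ^ i))"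
    by (auto simp: poly_altdef sum_distrib_left algebra_simps)
  moreover have "integrable lborel (\<lambda>x. \<Sum>i\<le>degree p. coeff p i * (std_normal_density x * x ^ i))"
    by (auto intro!: integrable_sum integrable_mult_right integrable_std_normal_moment)
  ultimately show ?thesis by simp
qed

lemma GE_add: "GE (p + q) = GE p + GE q"
  unfolding GE_def using GE_integrable[of p] GE_integrable[of q]
  by (simp add: distrib_left)

lemma GE_smult: "GE (smult c p) = c * GE p"
  unfolding GE_def by (simp add: mult.left_commute)

lemma GE_diff: "GE (p - q) = GE p - GE q"
  using GE_add[of "p - q" q] by simp

lemma GE_0: "GE 0 = 0" by (simp add: GE_def)

lemma GE_sum: "GE (\<Sum>i\<in>A. f i) = (\<Sum>i\<in>A. GE (f i))"
  by (induction A rule: infinite_finite_induct) (simp_all add: GE_add GE_0)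

lemma GE_monom: "GE (Polynomial.monom c k) = c * gm k"
  unfolding GE_def gm_def by (simp add: poly_monom mult.left_commute)

lemma GE_1: "GE 1 = 1"
  using GE_monom[of 1 0] gm_0 by (simp add: one_pCons monom_0)

lemma pCons0_add: "pCons 0 (p + q) = pCons 0 p + pCons 0 q"
  by simp

lemma pCons0_sum: "pCons 0 (\<Sum>i\<in>A. f i) = (\<Sum>i\<in>A. pCons 0 (f i))"
  by (induction A rule: infinite_finite_induct) (simp_all add: pCons0_add)

lemma pderiv_sum': "pderiv (\<Sum>i\<in>A. f i) = (\<Sum>i\<in>A. pderiv (f i))"
  by (induction A rule: infinite_finite_induct) (simp_all add: pderiv_add)

lemma GE_stein: "GE (pCons 0 p) = GE (pderiv p)"
proof -
  have "GE (pCons 0 p) = GE (pCons 0 (\<Sum>i\<le>degree p. Polynomial.monom (coeff p i) i))"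
    by (simp add: poly_as_sum_of_monoms)
  also have "\<dots> = (\<Sum>i\<le>degree p. coeff p i * gm (Suc i))"
    by (simp add: pCons0_sum GE_sum monom_Suc[symmetric] GE_monom)
  also have "\<dots> = (\<Sum>i\<le>degree p. GE (pderiv (Polynomial.monom (coeff p i) i)))"
    by (simp add: pderiv_monom GE_monom gm_Suc mult_ac)
  also have "\<dots> = GE (pderiv p)"
    by (simp add: GE_sum[symmetric] pderiv_sum'[symmetric] poly_as_sum_of_monoms)
  finally show ?thesis .
qed


lemma GE_He_step: "GE (He (Suc n) * p) = GE (He n * pderiv p)"
proof (cases n)
  case 0
  have "He (Suc 0) * p = pCons 0 p" by (simp add: mult_pCons_left)
  then show ?thesis using 0 by (simp add: GE_stein)
next
  case (Suc m)
  have "He (Suc n) * p = pCons 0 (He (Suc m) * p) - smult (real (Suc m)) (He m * p)"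
    using Suc by (simp add: mult_pCons_left left_diff_distrib)
  then have "GE (He (Suc n) * p) = GE (pderiv (He (Suc m) * p)) - real (Suc m) * GE (He m * p)"
    by (simp add: GE_diff GE_smult GE_stein)
  also have "\<dots> = GE (He (Suc m) * pderiv p)"
    by (simp add: pderiv_mult pderiv_He GE_add GE_smult mult.commute)
  finally show ?thesis using Suc by simp
qed

lemma GE_He: "GE (He n * p) = GE ((pderiv ^^ n) p)"
proof (induction n arbitrary: p)
  case 0 then show ?case by simp
next
  case (Suc n)
  then show ?case by (simp add: GE_He_step funpow_Suc_right del: funpow.simps)
qed

lemma funpow_pderiv_smult: "(pderiv ^^ k) (smult c p) = smult c ((pderiv ^^ k) p)"
  by (induction k) (simp_all add: pderiv_smult)

lemma funpow_pderiv_0: "(pderiv ^^ k) 0 = (0 :: real poly)"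
  by (induction k) simp_all

lemma pderivs_He: "(pderiv ^^ k) (He (k + m)) = smult (fact (k + m) / fact m) (He m)"
proof (induction k)
  case 0 then show ?case by simp
next
  case (Suc k)
  have "(pderiv ^^ Suc k) (He (Suc k + m)) = (pderiv ^^ k) (pderiv (He (Suc (k + m))))"
    by (simp add: funpow_Suc_right del: funpow.simps)
  also have "\<dots> = smult (real (Suc (k + m))) ((pderiv ^^ k) (He (k + m)))"
    by (simp add: pderiv_He funpow_pderiv_smult)
  also have "\<dots> = smult (fact (Suc k + m) / fact m) (He m)"
    using Suc by (simp add: fact_Suc)
  finally show ?case .
qed

lemma pderivs_He_top: "(pderiv ^^ m) (He m) = [:fact m:]"
proof -
  have "(pderiv ^^ m) (He (m + 0)) = smult (fact (m + 0) / fact 0) (He 0)" by (rule pderivs_He)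
  then show ?thesis by simp
qed

lemma pderivs_He_zero: "m < k \<Longrightarrow> (pderiv ^^ k) (He m) = 0"
proof -
  assume "m < k"
  then obtain j where k: "k = Suc j + m" using less_imp_Suc_add by (metis add.commute add_Suc)
  have "(pderiv ^^ k) (He m) = (pderiv ^^ Suc j) ((pderiv ^^ m) (He m))"
    unfolding k funpow_add by simp
  also have "\<dots> = (pderiv ^^ j) (pderiv [:fact m:])"
    unfolding pderivs_He_top funpow_Suc_right by simp
  also have "\<dots> = 0" by (simp add: funpow_pderiv_0)
  finally show ?thesis .
qed

lemma GE_const: "GE [:c:] = c"
  using GE_monom[of c 0] gm_0 by (simp add: monom_0)

lemma He_orth_le: "m \<le> n \<Longrightarrow> GE (He n * He m) = (if n = m then fact n else 0)"
proof -
  assume mn: "m \<le> n"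
  show ?thesis
  proof (cases "m = n")
    case True
    then show ?thesis by (simp add: GE_He pderivs_He_top GE_const)
  next
    case False
    then show ?thesis using mn pderivs_He_zero[of m n] by (simp add: GE_He GE_0)
  qed
qed

lemma He_orth: "GE (He n * He m) = (if n = m then fact n else 0)"
  using He_orth_le[of m n] He_orth_le[of n m] by (cases "m \<le> n") (auto simp: mult.commute)

lemma GE_He_single: "GE (He n) = (if n = 0 then 1 else 0)"
  using He_orth[of n 0] by simp

lemma He_basis: "degree p \<le> n \<Longrightarrow> \<exists>t. p = (\<Sum>k\<le>n. smult (t k) (He k))"
proof (induction n arbitrary: p)
  case 0
  then have "p = [:coeff p 0:]" by (metis degree_0_id le_zero_eq)
  then have "p = smult (coeff p 0) (He 0)" by (metis He.simps(1) mult.right_neutral smult_one) 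
  then show ?case by auto
next
  case (Suc n)
  define q where "q = p - smult (coeff p (Suc n)) (He (Suc n))"
  have "degree q \<le> Suc n" unfolding q_def using Suc.prems degree_He[of "Suc n"]
    by (intro degree_diff_le) auto
  moreover have "coeff q (Suc n) = 0" unfolding q_def using degree_He[of "Suc n"] by simp
  ultimately have "degree q \<le> n"
  proof -
    have "\<forall>i>n. coeff q i = 0"
    proof (intro allI impI)
      fix i assume "n < i"
      then show "coeff q i = 0"
      proof (cases "i = Suc n")
        case False
        with \<open>n < i\<close> have "degree q < i" using \<open>degree q \<le> Suc n\<close> by simp
        then show ?thesis by (simp add: coeff_eq_0)
      qed (use \<open>coeff q (Suc n) = 0\<close> in simp)
    qed
    then show ?thesis by (rule degree_le)
  qed
  then obtain t where t: "q = (\<Sum>k\<le>n. smult (t k) (He k))" using Suc.IH by blast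
  define t' where "t' = t(Suc n := coeff p (Suc n))"
  have "(\<Sum>k\<le>Suc n. smult (t' k) (He k)) = (\<Sum>k\<le>n. smult (t k) (He k)) + smult (coeff p (Suc n)) (He (Suc n))"
    unfolding t'_def by (simp add: sum.atMost_Suc)
  also have "\<dots> = p" using t q_def by simp
  finally have "p = (\<Sum>k\<le>Suc n. smult (t' k) (He k))" by simp
  then show ?case by blast
qed

lemma pow_He: "\<exists>t. \<forall>z. z ^ n = (\<Sum>k\<le>n. t k * poly (He k) z)"
proof -
  obtain t where t: "Polynomial.monom 1 n = (\<Sum>k\<le>n. smult (t k) (He k))"
    using He_basis[of "Polynomial.monom (1::real) n" n] by (auto simp: degree_monom_le)
  have "\<forall>z. z ^ n = (\<Sum>k\<le>n. t k * poly (He k) z)"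
  proof
    fix z :: real
    have "z ^ n = poly (Polynomial.monom 1 n) z" by (simp add: poly_monom)
    also have "\<dots> = (\<Sum>k\<le>n. t k * poly (He k) z)" by (simp add: t poly_sum)
    finally show "z ^ n = (\<Sum>k\<le>n. t k * poly (He k) z)" .
  qed
  then show ?thesis by blast
qed

definition tc :: "nat \<Rightarrow> nat \<Rightarrow> real" where
  "tc n = (SOME t. \<forall>z. z ^ n = (\<Sum>k\<le>n. t k * poly (He k) z))"

lemma tc: "z ^ n = (\<Sum>k\<le>n. tc n k * poly (He k) z)"
  using someI_ex[OF pow_He[of n]] unfolding tc_def by blast


lemma poly_eq_by_pderiv:
  fixes p q :: "real poly"
  assumes "pderiv p = pderiv q" "poly p 0 = poly q 0"
  shows "p = q"
proof -
  have "pderiv (p - q) = 0" using assms by (simp add: pderiv_diff)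
  then have "degree (p - q) = 0" by (simp add: pderiv_eq_0_iff)
  then have "p - q = [:coeff (p - q) 0:]" by (metis degree_0_id)
  moreover have "coeff (p - q) 0 = 0" using assms(2) by (simp add: poly_0_coeff_0)
  ultimately show ?thesis by simp
qed

definition GA :: "real \<Rightarrow> nat \<Rightarrow> real poly" where
  "GA z n = (\<Sum>k\<le>n. Polynomial.monom (real (n choose k) * poly (He k) z) (n - k))"

lemma smult_sum_right: "smult c (\<Sum>i\<in>A. f i) = (\<Sum>i\<in>A. smult c (f i))"
  by (induction A rule: infinite_finite_induct) (simp_all add: smult_add_right)

lemma pderiv_GA: "pderiv (GA z (Suc n)) = smult (real (Suc n)) (GA z n)"
proof -
  have "pderiv (GA z (Suc n)) = (\<Sum>k\<le>Suc n. Polynomial.monom (real (Suc n - k) * (real (Suc n choose k) * poly (He k) z)) (n - k))"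
    unfolding GA_def pderiv_sum' by (simp add: pderiv_monom)
  also have "\<dots> = (\<Sum>k\<le>n. Polynomial.monom (real (Suc n - k) * (real (Suc n choose k) * poly (He k) z)) (n - k))"
    by (simp add: sum.atMost_Suc)
  also have "\<dots> = (\<Sum>k\<le>n. smult (real (Suc n)) (Polynomial.monom (real (n choose k) * poly (He k) z) (n - k)))"
  proof (rule sum.cong[OF refl])
    fix k assume "k \<in> {..n}"
    have "real (Suc n - k) * real (Suc n choose k) = real (Suc n) * real (n choose k)"
      using binomial_absorb_comp[of "Suc n" k] by (metis diff_Suc_1 of_nat_mult)
    then show "Polynomial.monom (real (Suc n - k) * (real (Suc n choose k) * poly (He k) z)) (n - k) =
      smult (real (Suc n)) (Polynomial.monom (real (n choose k) * poly (He k) z) (n - k))"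
      by (simp add: smult_monom mult.assoc[symmetric])
  qed
  also have "\<dots> = smult (real (Suc n)) (GA z n)"
    unfolding GA_def by (simp add: smult_sum_right)
  finally show ?thesis .
qed

lemma poly_GA_0: "poly (GA z n) 0 = poly (He n) z"
proof -
  have "poly (GA z n) 0 = (\<Sum>k\<le>n. real (n choose k) * poly (He k) z * 0 ^ (n - k))"
    unfolding GA_def by (simp add: poly_sum poly_monom)
  also have "\<dots> = (\<Sum>k\<in>{n}. real (n choose k) * poly (He k) z * 0 ^ (n - k))"
    by (intro sum.mono_neutral_right) auto
  finally show ?thesis by simp
qed

lemma appell_poly: "pcompose (He n) [:z, 1:] = GA z n"
proof (induction n)
  case 0 then show ?case by (simp add: GA_def pcompose_1 monom_0 one_pCons)
next
  case (Suc n)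
  show ?case
  proof (rule poly_eq_by_pderiv)
    show "pderiv (pcompose (He (Suc n)) [:z, 1:]) = pderiv (GA z (Suc n))"
      using Suc by (simp add: pderiv_pcompose pderiv_He pcompose_smult pderiv_GA pderiv_pCons)
    show "poly (pcompose (He (Suc n)) [:z, 1:]) 0 = poly (GA z (Suc n)) 0"
      by (simp add: poly_pcompose poly_GA_0)
  qed
qed

lemma appell1: "poly (He n) (x + z) = (\<Sum>k\<le>n. real (n choose k) * x ^ (n - k) * poly (He k) z)"
proof -
  have "poly (He n) (x + z) = poly (pcompose (He n) [:z, 1:]) x" by (simp add: poly_pcompose add.commute)
  also have "\<dots> = (\<Sum>k\<le>n. real (n choose k) * x ^ (n - k) * poly (He k) z)"
    unfolding appell_poly GA_def by (simp add: poly_sum poly_monom mult_ac)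
  finally show ?thesis .
qed

lemma le_set_Pi: "{\<beta>::'n \<Rightarrow> nat. \<beta> \<le> \<alpha>} = PiE UNIV (\<lambda>i. {..\<alpha> i})"
  by (auto simp: PiE_UNIV_domain le_fun_def)

lemma finite_le_set: "finite {\<beta>::'n::finite \<Rightarrow> nat. \<beta> \<le> \<alpha>}"
  unfolding le_set_Pi by (intro finite_PiE) auto

lemma finite_SD: "finite {\<alpha>::'n::finite \<Rightarrow> nat. mdeg \<alpha> \<le> D}"
proof (rule finite_subset[OF _ finite_le_set[of "\<lambda>_. D"]])
  show "{\<alpha>::'n \<Rightarrow> nat. mdeg \<alpha> \<le> D} \<subseteq> {\<beta>. \<beta> \<le> (\<lambda>_. D)}"
  proof
    fix \<alpha> :: "'n \<Rightarrow> nat" assume "\<alpha> \<in> {\<alpha>. mdeg \<alpha> \<le> D}"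
    then have "\<alpha> i \<le> D" for i
      using member_le_sum[of i UNIV \<alpha>] unfolding mdeg_def by auto
    then show "\<alpha> \<in> {\<beta>. \<beta> \<le> (\<lambda>_. D)}" by (auto simp: le_fun_def)
  qed
qed

lemma mdeg_mono: "\<beta> \<le> \<alpha> \<Longrightarrow> mdeg \<beta> \<le> mdeg (\<alpha>::'n::finite \<Rightarrow> nat)"
  unfolding mdeg_def by (intro sum_mono) (auto simp: le_fun_def)

lemma prod_sum_le:
  fixes f :: "'n::finite \<Rightarrow> nat \<Rightarrow> real"
  shows "(\<Prod>i\<in>UNIV. \<Sum>k\<le>a i. f i k) = (\<Sum>\<beta>\<in>{\<beta>. \<beta> \<le> a}. \<Prod>i\<in>UNIV. f i (\<beta> i))"
  unfolding le_set_Pi by (rule prod_sum_PiE) auto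

definition H :: "('n::finite \<Rightarrow> nat) \<Rightarrow> ('n \<Rightarrow> real) \<Rightarrow> real" where
  "H \<beta> y = (\<Prod>i\<in>UNIV. poly (He (\<beta> i)) (y i))"

lemma appellN: "H \<alpha> (\<lambda>i. x i + z i) =
  (\<Sum>\<beta>\<in>{\<beta>. \<beta> \<le> \<alpha>}. mbinom \<alpha> \<beta> * monom (\<lambda>i. \<alpha> i - \<beta> i) x * H \<beta> z)"
  unfolding H_def appell1 prod_sum_le mbinom_def monom_def
  by (simp add: prod.distrib)

lemma monom_H: "monom \<alpha> y = (\<Sum>\<beta>\<in>{\<beta>. \<beta> \<le> \<alpha>}. (\<Prod>i\<in>UNIV. tc (\<alpha> i) (\<beta> i)) * H \<beta> y)"
  unfolding monom_def H_def by (subst tc) (simp add: prod_sum_le prod.distrib)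


lemma poly_borel[measurable]: "(\<lambda>x::real. poly p x) \<in> borel_measurable borel"
  by (intro borel_measurable_continuous_onI continuous_on_poly continuous_on_id)

lemma poly_borel_comp[measurable]: "f \<in> borel_measurable N \<Longrightarrow> (\<lambda>x. poly p (f x :: real)) \<in> borel_measurable N"
  using measurable_comp[OF _ poly_borel, of f N p] by (simp add: comp_def)

lemma monom_borel[measurable]: "(\<lambda>y. monom \<alpha> y) \<in> borel_measurable (Pi\<^sub>M UNIV (\<lambda>_. borel))"
  unfolding monom_def by measurable

lemma H_borel[measurable]: "(\<lambda>y. H \<beta> y) \<in> borel_measurable (Pi\<^sub>M UNIV (\<lambda>_. borel))"
  unfolding H_def by measurable

lemma monom_add: "monom (\<lambda>i. \<alpha> i + \<beta> i) y = monom \<alpha> y * monom \<beta> y"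
  unfolding monom_def by (simp add: power_add prod.distrib)

lemma monom_0[simp]: "monom (\<lambda>_. 0) y = 1"
  unfolding monom_def by simp

lemma H_0[simp]: "H (\<lambda>_. 0) y = 1"
  unfolding H_def by simp

lemma pol_mult:
  "(\<Sum>j\<in>F. c j * monom (e j) y) * (\<Sum>k\<in>G. d k * monom (e' k) y) =
   (\<Sum>jk\<in>F \<times> G. (c (fst jk) * d (snd jk)) * monom (\<lambda>i. e (fst jk) i + e' (snd jk) i) y)"
  by (simp add: sum_product sum.cartesian_product monom_add mult_ac split_def)

locale gsetting = prob_space M for M :: "'a measure" +
  fixes X Z :: "'a \<Rightarrow> 'n::finite \<Rightarrow> real" and g :: "('n \<Rightarrow> real) \<Rightarrow> real"
  assumes g_meas[measurable]: "g \<in> borel_measurable (Pi\<^sub>M UNIV (\<lambda>_. borel))"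
    and X_moments: "\<And>\<alpha>. integrable M (\<lambda>\<omega>. monom \<alpha> (X \<omega>))"
    and joint_moments: "\<And>(k::nat) \<alpha>. integrable M (\<lambda>\<omega>. g (X \<omega>) ^ k * monom \<alpha> (X \<omega>))"
    and Z_gauss: "\<And>i. distributed M lborel (\<lambda>\<omega>. Z \<omega> i) std_normal_density"
    and Z_iid: "indep_vars (\<lambda>_. borel) (\<lambda>i \<omega>. Z \<omega> i) UNIV"
    and XZ_indep: "indep_var (Pi\<^sub>M UNIV (\<lambda>_. borel)) X (Pi\<^sub>M UNIV (\<lambda>_. borel)) Z"
begin

lemma X_meas[measurable]: "X \<in> measurable M (Pi\<^sub>M UNIV (\<lambda>_. borel))"
  using indep_var_rv1[OF XZ_indep] by simp

lemma Z_meas[measurable]: "Z \<in> measurable M (Pi\<^sub>M UNIV (\<lambda>_. borel))"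
  using indep_var_rv2[OF XZ_indep] by simp

lemma split_indep:
  fixes F G :: "('n \<Rightarrow> real) \<Rightarrow> real"
  assumes [measurable]: "F \<in> borel_measurable (Pi\<^sub>M UNIV (\<lambda>_. borel))" "G \<in> borel_measurable (Pi\<^sub>M UNIV (\<lambda>_. borel))"
    and "integrable M (\<lambda>\<omega>. F (X \<omega>))" "integrable M (\<lambda>\<omega>. G (Z \<omega>))"
  shows "integrable M (\<lambda>\<omega>. F (X \<omega>) * G (Z \<omega>))"
    and "(\<integral>\<omega>. F (X \<omega>) * G (Z \<omega>) \<partial>M) = (\<integral>\<omega>. F (X \<omega>) \<partial>M) * (\<integral>\<omega>. G (Z \<omega>) \<partial>M)"
proof -
  have ind: "indep_var borel (F \<circ> X) borel (G \<circ> Z)"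
    by (rule indep_var_compose[OF XZ_indep assms(1,2)])
  then have ind': "indep_var borel (\<lambda>\<omega>. F (X \<omega>)) borel (\<lambda>\<omega>. G (Z \<omega>))"
    by (simp add: comp_def)
  show "integrable M (\<lambda>\<omega>. F (X \<omega>) * G (Z \<omega>))"
    by (rule indep_var_integrable) (use ind' assms in auto)
  show "(\<integral>\<omega>. F (X \<omega>) * G (Z \<omega>) \<partial>M) = (\<integral>\<omega>. F (X \<omega>) \<partial>M) * (\<integral>\<omega>. G (Z \<omega>) \<partial>M)"
    by (rule indep_var_lebesgue_integral) (use ind' assms in auto)
qed

lemma Zi_poly:
  shows "integrable M (\<lambda>\<omega>. poly p (Z \<omega> i))" and "(\<integral>\<omega>. poly p (Z \<omega> i) \<partial>M) = GE p"
proof -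
  have m: "(\<lambda>x. poly p x) \<in> borel_measurable lborel" by simp
  show "integrable M (\<lambda>\<omega>. poly p (Z \<omega> i))"
    using distributed_integrable[OF Z_gauss[of i] m] GE_integrable[of p] by simp
  show "(\<integral>\<omega>. poly p (Z \<omega> i) \<partial>M) = GE p"
    using distributed_integral[OF Z_gauss[of i] m] unfolding GE_def by simp
qed

lemma Z_prod:
  shows "integrable M (\<lambda>\<omega>. \<Prod>i\<in>UNIV. poly (p i) (Z \<omega> i))"
    and "(\<integral>\<omega>. (\<Prod>i\<in>UNIV. poly (p i) (Z \<omega> i)) \<partial>M) = (\<Prod>i\<in>UNIV. GE (p i))"
proof -
  have ind: "indep_vars (\<lambda>_. borel) (\<lambda>i \<omega>. poly (p i) (Z \<omega> i)) UNIV"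
    by (rule indep_vars_compose2[OF Z_iid]) simp
  have fin: "finite (UNIV :: 'n set)" by simp
  show "integrable M (\<lambda>\<omega>. \<Prod>i\<in>UNIV. poly (p i) (Z \<omega> i))"
    by (rule indep_vars_integrable[OF fin ind]) (rule Zi_poly(1))
  show "(\<integral>\<omega>. (\<Prod>i\<in>UNIV. poly (p i) (Z \<omega> i)) \<partial>M) = (\<Prod>i\<in>UNIV. GE (p i))"
    by (subst indep_vars_lebesgue_integral[OF fin ind]) (simp_all add: Zi_poly)
qed

lemma H_orth:
  shows "integrable M (\<lambda>\<omega>. H \<beta> (Z \<omega>) * H \<beta>' (Z \<omega>))"
    and "(\<integral>\<omega>. H \<beta> (Z \<omega>) * H \<beta>' (Z \<omega>) \<partial>M) = (if \<beta> = \<beta>' then mfact \<beta> else 0)"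
proof -
  have eq: "H \<beta> z * H \<beta>' z = (\<Prod>i\<in>UNIV. poly (He (\<beta> i) * He (\<beta>' i)) (z i))" for z
    unfolding H_def by (simp add: prod.distrib)
  show "integrable M (\<lambda>\<omega>. H \<beta> (Z \<omega>) * H \<beta>' (Z \<omega>))"
    unfolding eq by (rule Z_prod)
  have "(\<integral>\<omega>. H \<beta> (Z \<omega>) * H \<beta>' (Z \<omega>) \<partial>M) = (\<Prod>i\<in>UNIV. GE (He (\<beta> i) * He (\<beta>' i)))"
    unfolding eq by (rule Z_prod)
  also have "\<dots> = (\<Prod>i\<in>UNIV. if \<beta> i = \<beta>' i then fact (\<beta> i) else 0)"
    by (simp add: He_orth)
  also have "\<dots> = (if \<beta> = \<beta>' then mfact \<beta> else 0)"
  proof (cases "\<beta> = \<beta>'")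
    case True then show ?thesis by (simp add: mfact_def)
  next
    case False
    then obtain i where "\<beta> i \<noteq> \<beta>' i" by auto
    then show ?thesis using False by (intro trans[OF prod_zero]) auto
  qed
  finally show "(\<integral>\<omega>. H \<beta> (Z \<omega>) * H \<beta>' (Z \<omega>) \<partial>M) = (if \<beta> = \<beta>' then mfact \<beta> else 0)" .
qed

lemma H_mean:
  shows "integrable M (\<lambda>\<omega>. H \<beta> (Z \<omega>))"
    and "(\<integral>\<omega>. H \<beta> (Z \<omega>) \<partial>M) = (if \<beta> = (\<lambda>_. 0) then 1 else 0)"
  using H_orth[of \<beta> "\<lambda>_. 0"] by (auto simp: mfact_def)

lemma int_pol: "integrable M (\<lambda>\<omega>. \<Sum>j\<in>F. c j * monom (e j) (X \<omega>))"
  by (auto intro!: integrable_sum integrable_mult_right X_moments)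

lemma int_gpol: "integrable M (\<lambda>\<omega>. g (X \<omega>) * (\<Sum>j\<in>F. c j * monom (e j) (X \<omega>)))"
proof -
  have "integrable M (\<lambda>\<omega>. g (X \<omega>) * monom \<alpha> (X \<omega>))" for \<alpha>
    using joint_moments[of 1 \<alpha>] by simp
  then have "integrable M (\<lambda>\<omega>. \<Sum>j\<in>F. c j * (g (X \<omega>) * monom (e j) (X \<omega>)))"
    by (auto intro!: integrable_sum integrable_mult_right)
  then show ?thesis by (simp add: sum_distrib_left mult_ac)
qed

lemma var_ge:
  fixes A :: "'a \<Rightarrow> real"
  assumes "integrable M A" "integrable M (\<lambda>\<omega>. (A \<omega>)\<^sup>2)"
  shows "(\<integral>\<omega>. A \<omega> \<partial>M)\<^sup>2 \<le> (\<integral>\<omega>. (A \<omega>)\<^sup>2 \<partial>M)"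
proof -
  define c where "c = (\<integral>\<omega>. A \<omega> \<partial>M)"
  have "0 \<le> (\<integral>\<omega>. (A \<omega> - c)\<^sup>2 \<partial>M)" by (intro integral_nonneg_AE) auto
  also have "(\<lambda>\<omega>. (A \<omega> - c)\<^sup>2) = (\<lambda>\<omega>. (A \<omega>)\<^sup>2 - 2 * c * A \<omega> + c\<^sup>2)"
    by (auto simp: power2_eq_square algebra_simps)
  also have "(\<integral>\<omega>. (A \<omega>)\<^sup>2 - 2 * c * A \<omega> + c\<^sup>2 \<partial>M) = (\<integral>\<omega>. (A \<omega>)\<^sup>2 \<partial>M) - 2 * c * c + c\<^sup>2"
    using assms by (simp add: c_def prob_space)
  finally show ?thesis by (simp add: c_def power2_eq_square)
qed

end


abbreviation SD :: "nat \<Rightarrow> ('n::finite \<Rightarrow> nat) set" where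
  "SD D \<equiv> {\<alpha>. mdeg \<alpha> \<le> D}"

lemma sum_le_S:
  assumes "mdeg (\<alpha>::'n::finite \<Rightarrow> nat) \<le> D"
  shows "(\<Sum>\<beta>\<in>{\<beta>. \<beta> \<le> \<alpha>}. F \<beta>) = (\<Sum>\<beta>\<in>SD D. if \<beta> \<le> \<alpha> then F \<beta> else (0::real))"
proof -
  have "{\<beta>. \<beta> \<le> \<alpha>} = {\<beta> \<in> SD D. \<beta> \<le> \<alpha>}"
    using assms by (auto intro: order_trans[OF mdeg_mono])
  then show ?thesis using sum.inter_filter[OF finite_SD[of D], of F "\<lambda>\<beta>. \<beta> \<le> \<alpha>"] by simp
qed

lemma sum_if_eq: "finite A \<Longrightarrow> a \<in> A \<Longrightarrow> (\<Sum>x\<in>A. f x * (if a = x then c else 0)) = f a * (c::real)"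
proof -
  assume "finite A" "a \<in> A"
  have "(\<Sum>x\<in>A. f x * (if a = x then c else 0)) = (\<Sum>x\<in>A. if a = x then f a * c else 0)"
    by (rule sum.cong) auto
  also have "\<dots> = f a * c" using \<open>finite A\<close> \<open>a \<in> A\<close> by (simp add: sum.delta)
  finally show ?thesis .
qed

lemma f_H:
  fixes f :: "('n::finite \<Rightarrow> real) \<Rightarrow> real"
  assumes "f \<in> polys_le D"
  shows "\<exists>h. \<forall>y. f y = (\<Sum>\<beta>\<in>SD D. h \<beta> * H \<beta> y)"
proof -
  obtain a where fa: "\<And>y. f y = (\<Sum>\<alpha>\<in>SD D. a \<alpha> * monom \<alpha> y)"
    using assms unfolding polys_le_def by blast
  define T where "T \<alpha> \<beta> = (\<Prod>i\<in>UNIV. tc (\<alpha> i) (\<beta> i))" for \<alpha> \<beta> :: "'n \<Rightarrow> nat"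
  define h where "h \<beta> = (\<Sum>\<alpha>\<in>SD D. a \<alpha> * (if \<beta> \<le> \<alpha> then T \<alpha> \<beta> else 0))" for \<beta>
  have "f y = (\<Sum>\<beta>\<in>SD D. h \<beta> * H \<beta> y)" for y
  proof -
    have "f y = (\<Sum>\<alpha>\<in>SD D. a \<alpha> * (\<Sum>\<beta>\<in>SD D. if \<beta> \<le> \<alpha> then T \<alpha> \<beta> * H \<beta> y else 0))"
      unfolding fa T_def by (intro sum.cong refl) (simp add: monom_H[of _ y] sum_le_S)
    also have "\<dots> = (\<Sum>\<alpha>\<in>SD D. \<Sum>\<beta>\<in>SD D. (a \<alpha> * (if \<beta> \<le> \<alpha> then T \<alpha> \<beta> else 0)) * H \<beta> y)"
      unfolding sum_distrib_left by (intro sum.cong refl) auto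
    also have "\<dots> = (\<Sum>\<beta>\<in>SD D. \<Sum>\<alpha>\<in>SD D. (a \<alpha> * (if \<beta> \<le> \<alpha> then T \<alpha> \<beta> else 0)) * H \<beta> y)"
      by (rule sum.swap)
    also have "\<dots> = (\<Sum>\<beta>\<in>SD D. h \<beta> * H \<beta> y)"
      by (simp add: h_def sum_distrib_right)
    finally show ?thesis .
  qed
  then show ?thesis by blast
qed

definition A :: "nat \<Rightarrow> (('n::finite \<Rightarrow> nat) \<Rightarrow> real) \<Rightarrow> ('n \<Rightarrow> nat) \<Rightarrow> ('n \<Rightarrow> real) \<Rightarrow> real" where
  "A D h \<beta> x = (\<Sum>\<alpha>\<in>SD D. (h \<alpha> * (if \<beta> \<le> \<alpha> then mbinom \<alpha> \<beta> else 0)) * monom (\<lambda>i. \<alpha> i - \<beta> i) x)"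

lemma A_meas[measurable]: "(\<lambda>x. A D h \<beta> x) \<in> borel_measurable (Pi\<^sub>M UNIV (\<lambda>_. borel))"
  unfolding A_def by measurable

lemma f_A:
  assumes "\<And>y. f y = (\<Sum>\<beta>\<in>SD D. h \<beta> * H \<beta> y)"
  shows "f (\<lambda>i. x i + z i) = (\<Sum>\<beta>\<in>SD D. A D h \<beta> x * H \<beta> z)"
proof -
  have "f (\<lambda>i. x i + z i) = (\<Sum>\<alpha>\<in>SD D. h \<alpha> * (\<Sum>\<beta>\<in>SD D. if \<beta> \<le> \<alpha> then mbinom \<alpha> \<beta> * monom (\<lambda>i. \<alpha> i - \<beta> i) x * H \<beta> z else 0))"
    unfolding assms by (intro sum.cong refl) (simp add: appellN sum_le_S)
  also have "\<dots> = (\<Sum>\<alpha>\<in>SD D. \<Sum>\<beta>\<in>SD D. ((h \<alpha> * (if \<beta> \<le> \<alpha> then mbinom \<alpha> \<beta> else 0)) * monom (\<lambda>i. \<alpha> i - \<beta> i) x) * H \<beta> z)"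
    unfolding sum_distrib_left by (intro sum.cong refl) auto
  also have "\<dots> = (\<Sum>\<beta>\<in>SD D. \<Sum>\<alpha>\<in>SD D. ((h \<alpha> * (if \<beta> \<le> \<alpha> then mbinom \<alpha> \<beta> else 0)) * monom (\<lambda>i. \<alpha> i - \<beta> i) x) * H \<beta> z)"
    by (rule sum.swap)
  also have "\<dots> = (\<Sum>\<beta>\<in>SD D. A D h \<beta> x * H \<beta> z)"
    by (simp add: A_def sum_distrib_right)
  finally show ?thesis .
qed

context gsetting
begin

lemma intA: "integrable M (\<lambda>\<omega>. A D h \<beta> (X \<omega>))"
  unfolding A_def by (rule int_pol)

lemma intAA: "integrable M (\<lambda>\<omega>. A D h \<beta> (X \<omega>) * A D h \<beta>' (X \<omega>))"
  unfolding A_def pol_mult by (rule int_pol)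

lemma intgA: "integrable M (\<lambda>\<omega>. g (X \<omega>) * A D h \<beta> (X \<omega>))"
  unfolding A_def by (rule int_gpol)

lemma Ef2:
  assumes fA: "\<And>x z. f (\<lambda>i. x i + z i) = (\<Sum>\<beta>\<in>SD D. A D h \<beta> x * H \<beta> z)"
  shows "integrable M (\<lambda>\<omega>. (f (\<lambda>i. X \<omega> i + Z \<omega> i))\<^sup>2)"
    and "(\<integral>\<omega>. (f (\<lambda>i. X \<omega> i + Z \<omega> i))\<^sup>2 \<partial>M) = (\<Sum>\<beta>\<in>SD D. (\<integral>\<omega>. (A D h \<beta> (X \<omega>))\<^sup>2 \<partial>M) * mfact \<beta>)"
proof -
  have pt: "(f (\<lambda>i. X \<omega> i + Z \<omega> i))\<^sup>2 = (\<Sum>\<beta>\<in>SD D. \<Sum>\<beta>'\<in>SD D.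
      (A D h \<beta> (X \<omega>) * A D h \<beta>' (X \<omega>)) * (H \<beta> (Z \<omega>) * H \<beta>' (Z \<omega>)))" for \<omega>
    unfolding fA power2_eq_square sum_product by (simp add: mult_ac)
  have it: "integrable M (\<lambda>\<omega>. (A D h \<beta> (X \<omega>) * A D h \<beta>' (X \<omega>)) * (H \<beta> (Z \<omega>) * H \<beta>' (Z \<omega>)))"
    and ie: "(\<integral>\<omega>. (A D h \<beta> (X \<omega>) * A D h \<beta>' (X \<omega>)) * (H \<beta> (Z \<omega>) * H \<beta>' (Z \<omega>)) \<partial>M)
       = (\<integral>\<omega>. A D h \<beta> (X \<omega>) * A D h \<beta>' (X \<omega>) \<partial>M) * (if \<beta> = \<beta>' then mfact \<beta> else 0)" for \<beta> \<beta>'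
  proof -
    have m1: "(\<lambda>x. A D h \<beta> x * A D h \<beta>' x) \<in> borel_measurable (Pi\<^sub>M UNIV (\<lambda>_. borel))" by measurable
    have m2: "(\<lambda>z. H \<beta> z * H \<beta>' z) \<in> borel_measurable (Pi\<^sub>M UNIV (\<lambda>_. borel))" by measurable
    show "integrable M (\<lambda>\<omega>. (A D h \<beta> (X \<omega>) * A D h \<beta>' (X \<omega>)) * (H \<beta> (Z \<omega>) * H \<beta>' (Z \<omega>)))"
      using split_indep(1)[OF m1 m2 intAA H_orth(1)] .
    show "(\<integral>\<omega>. (A D h \<beta> (X \<omega>) * A D h \<beta>' (X \<omega>)) * (H \<beta> (Z \<omega>) * H \<beta>' (Z \<omega>)) \<partial>M)
       = (\<integral>\<omega>. A D h \<beta> (X \<omega>) * A D h \<beta>' (X \<omega>) \<partial>M) * (if \<beta> = \<beta>' then mfact \<beta> else 0)"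
      using split_indep(2)[OF m1 m2 intAA H_orth(1)] by (simp add: H_orth(2))
  qed
  show "integrable M (\<lambda>\<omega>. (f (\<lambda>i. X \<omega> i + Z \<omega> i))\<^sup>2)"
    unfolding pt using it by auto
  have "(\<integral>\<omega>. (f (\<lambda>i. X \<omega> i + Z \<omega> i))\<^sup>2 \<partial>M) = (\<Sum>\<beta>\<in>SD D. \<Sum>\<beta>'\<in>SD D.
      (\<integral>\<omega>. A D h \<beta> (X \<omega>) * A D h \<beta>' (X \<omega>) \<partial>M) * (if \<beta> = \<beta>' then mfact \<beta> else 0))"
    unfolding pt using it by (simp add: ie)
  also have "\<dots> = (\<Sum>\<beta>\<in>SD D. (\<integral>\<omega>. (A D h \<beta> (X \<omega>))\<^sup>2 \<partial>M) * mfact \<beta>)"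
    by (intro sum.cong refl) (simp add: sum_if_eq finite_SD power2_eq_square)
  finally show "(\<integral>\<omega>. (f (\<lambda>i. X \<omega> i + Z \<omega> i))\<^sup>2 \<partial>M) = (\<Sum>\<beta>\<in>SD D. (\<integral>\<omega>. (A D h \<beta> (X \<omega>))\<^sup>2 \<partial>M) * mfact \<beta>)" .
qed

lemma Efg:
  assumes fA: "\<And>x z. f (\<lambda>i. x i + z i) = (\<Sum>\<beta>\<in>SD D. A D h \<beta> x * H \<beta> z)"
  shows "(\<integral>\<omega>. f (\<lambda>i. X \<omega> i + Z \<omega> i) * g (X \<omega>) \<partial>M) = (\<integral>\<omega>. g (X \<omega>) * A D h (\<lambda>_. 0) (X \<omega>) \<partial>M)"
proof -
  have pt: "f (\<lambda>i. X \<omega> i + Z \<omega> i) * g (X \<omega>) = (\<Sum>\<beta>\<in>SD D. (g (X \<omega>) * A D h \<beta> (X \<omega>)) * H \<beta> (Z \<omega>))" for \<omega>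
    unfolding fA by (simp add: sum_distrib_left sum_distrib_right mult_ac)
  have it: "integrable M (\<lambda>\<omega>. (g (X \<omega>) * A D h \<beta> (X \<omega>)) * H \<beta> (Z \<omega>))"
    and ie: "(\<integral>\<omega>. (g (X \<omega>) * A D h \<beta> (X \<omega>)) * H \<beta> (Z \<omega>) \<partial>M)
       = (\<integral>\<omega>. g (X \<omega>) * A D h \<beta> (X \<omega>) \<partial>M) * (if \<beta> = (\<lambda>_. 0) then 1 else 0)" for \<beta>
  proof -
    have m1: "(\<lambda>x. g x * A D h \<beta> x) \<in> borel_measurable (Pi\<^sub>M UNIV (\<lambda>_. borel))" by measurable
    show "integrable M (\<lambda>\<omega>. (g (X \<omega>) * A D h \<beta> (X \<omega>)) * H \<beta> (Z \<omega>))"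
      using split_indep(1)[OF m1 H_borel intgA H_mean(1)] .
    show "(\<integral>\<omega>. (g (X \<omega>) * A D h \<beta> (X \<omega>)) * H \<beta> (Z \<omega>) \<partial>M)
       = (\<integral>\<omega>. g (X \<omega>) * A D h \<beta> (X \<omega>) \<partial>M) * (if \<beta> = (\<lambda>_. 0) then 1 else 0)"
      using split_indep(2)[OF m1 H_borel intgA H_mean(1)] by (simp add: H_mean(2))
  qed
  have z: "(\<lambda>_. 0) \<in> SD D" by (simp add: mdeg_def)
  have "(\<integral>\<omega>. f (\<lambda>i. X \<omega> i + Z \<omega> i) * g (X \<omega>) \<partial>M) =
      (\<Sum>\<beta>\<in>SD D. (\<integral>\<omega>. g (X \<omega>) * A D h \<beta> (X \<omega>) \<partial>M) * (if (\<lambda>_. 0) = \<beta> then 1 else 0))"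
    unfolding pt using it by (simp add: ie eq_commute)
  also have "\<dots> = (\<integral>\<omega>. g (X \<omega>) * A D h (\<lambda>_. 0) (X \<omega>) \<partial>M)"
    by (subst sum_if_eq[OF finite_SD z]) simp
  finally show ?thesis .
qed

end


lemma mfact_pos: "mfact \<beta> > 0"
  unfolding mfact_def by (intro prod_pos) auto

lemma mfact_ge0[simp]: "0 \<le> mfact \<beta>"
  using mfact_pos[of \<beta>] by simp

lemma mfact_nz[simp]: "mfact \<beta> \<noteq> 0"
  using mfact_pos[of \<beta>] by simp

lemma zero_le_fun[simp]: "(\<lambda>_. 0::nat) \<le> \<alpha>"
  by (simp add: le_fun_def)

lemma mbinom_zero[simp]: "mbinom \<alpha> (\<lambda>_. 0) = 1"
  unfolding mbinom_def by simp

lemma ereal_sq_bound: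
  assumes "- ereal r \<le> c" "c \<le> ereal r"
  shows "c\<^sup>2 \<le> ereal (r\<^sup>2)"
proof (cases c)
  case (real x)
  have "- r \<le> x" using assms(1) real by simp
  moreover have "x \<le> r" using assms(2) real by simp
  ultimately have "\<bar>x\<bar> \<le> r" by linarith
  then have "\<bar>x\<bar>\<^sup>2 \<le> r\<^sup>2" by (rule power_mono) simp
  then have "x\<^sup>2 \<le> r\<^sup>2" by simp
  then show ?thesis using real by simp
next
  case PInf
  then show ?thesis using assms(2) by simp
next
  case MInf
  then show ?thesis using assms(1) by simp
qed

context gsetting
begin

definition mX :: "('n \<Rightarrow> nat) \<Rightarrow> real" where "mX \<gamma> = (\<integral>\<omega>. monom \<gamma> (X \<omega>) \<partial>M)"
definition cX :: "('n \<Rightarrow> nat) \<Rightarrow> real" where "cX \<gamma> = (\<integral>\<omega>. g (X \<omega>) * monom \<gamma> (X \<omega>) \<partial>M)"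

lemma kappa_id: "cX \<alpha> = (\<Sum>\<beta>\<in>{\<beta>. \<beta> \<le> \<alpha>}. kappa mX cX \<beta> * mbinom \<alpha> \<beta> * mX (\<lambda>i. \<alpha> i - \<beta> i))"
proof -
  have set: "{\<beta>. \<beta> \<le> \<alpha>} = insert \<alpha> {\<beta>. \<beta> \<le> \<alpha> \<and> \<beta> \<noteq> \<alpha>}" by auto
  have fin: "finite {\<beta>. \<beta> \<le> \<alpha> \<and> \<beta> \<noteq> \<alpha>}"
    by (rule finite_subset[OF _ finite_le_set[of \<alpha>]]) auto
  have b1: "mbinom \<alpha> \<alpha> = 1" unfolding mbinom_def by simp
  have m1: "mX (\<lambda>i. 0) = 1" unfolding mX_def by (simp add: prob_space)
  show ?thesis
    unfolding set using fin
    by (simp add: b1 m1 kappa.simps[of mX cX \<alpha>])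
qed

lemma A0: "A D h (\<lambda>_. 0) x = (\<Sum>\<alpha>\<in>SD D. h \<alpha> * monom \<alpha> x)"
proof -
  show ?thesis unfolding A_def by simp
qed

lemma EgA0: "(\<integral>\<omega>. g (X \<omega>) * A D h (\<lambda>_. 0) (X \<omega>) \<partial>M) = (\<Sum>\<alpha>\<in>SD D. h \<alpha> * cX \<alpha>)"
proof -
  have i: "integrable M (\<lambda>\<omega>. g (X \<omega>) * monom \<alpha> (X \<omega>))" for \<alpha>
    using joint_moments[of 1 \<alpha>] by simp
  have "(\<integral>\<omega>. g (X \<omega>) * A D h (\<lambda>_. 0) (X \<omega>) \<partial>M) = (\<integral>\<omega>. (\<Sum>\<alpha>\<in>SD D. h \<alpha> * (g (X \<omega>) * monom \<alpha> (X \<omega>))) \<partial>M)"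
    unfolding A0 by (simp add: sum_distrib_left mult_ac)
  also have "\<dots> = (\<Sum>\<alpha>\<in>SD D. h \<alpha> * cX \<alpha>)"
    using i by (simp add: cX_def)
  finally show ?thesis .
qed

lemma EA: "(\<integral>\<omega>. A D h \<beta> (X \<omega>) \<partial>M) = (\<Sum>\<alpha>\<in>SD D. (h \<alpha> * (if \<beta> \<le> \<alpha> then mbinom \<alpha> \<beta> else 0)) * mX (\<lambda>i. \<alpha> i - \<beta> i))"
  unfolding A_def mX_def using X_moments by simp

lemma lin: "(\<Sum>\<alpha>\<in>SD D. h \<alpha> * cX \<alpha>) = (\<Sum>\<beta>\<in>SD D. kappa mX cX \<beta> * (\<integral>\<omega>. A D h \<beta> (X \<omega>) \<partial>M))"
proof -
  have "(\<Sum>\<alpha>\<in>SD D. h \<alpha> * cX \<alpha>) = (\<Sum>\<alpha>\<in>SD D. h \<alpha> * (\<Sum>\<beta>\<in>SD D. if \<beta> \<le> \<alpha> then kappa mX cX \<beta> * mbinom \<alpha> \<beta> * mX (\<lambda>i. \<alpha> i - \<beta> i) else 0))"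
    by (intro sum.cong refl) (simp add: kappa_id[of \<alpha> for \<alpha>] sum_le_S)
  also have "\<dots> = (\<Sum>\<alpha>\<in>SD D. \<Sum>\<beta>\<in>SD D. kappa mX cX \<beta> * ((h \<alpha> * (if \<beta> \<le> \<alpha> then mbinom \<alpha> \<beta> else 0)) * mX (\<lambda>i. \<alpha> i - \<beta> i)))"
    unfolding sum_distrib_left by (intro sum.cong refl) auto
  also have "\<dots> = (\<Sum>\<beta>\<in>SD D. \<Sum>\<alpha>\<in>SD D. kappa mX cX \<beta> * ((h \<alpha> * (if \<beta> \<le> \<alpha> then mbinom \<alpha> \<beta> else 0)) * mX (\<lambda>i. \<alpha> i - \<beta> i)))"
    by (rule sum.swap)
  also have "\<dots> = (\<Sum>\<beta>\<in>SD D. kappa mX cX \<beta> * (\<integral>\<omega>. A D h \<beta> (X \<omega>) \<partial>M))"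
    by (simp add: EA sum_distrib_left)
  finally show ?thesis .
qed

lemma bound_f:
  fixes f :: "('n \<Rightarrow> real) \<Rightarrow> real"
  assumes fD: "f \<in> polys_le D" and ne: "(\<integral>\<omega>. (f (\<lambda>i. X \<omega> i + Z \<omega> i))\<^sup>2 \<partial>M) \<noteq> 0"
  shows "\<bar>(\<integral>\<omega>. f (\<lambda>i. X \<omega> i + Z \<omega> i) * g (X \<omega>) \<partial>M) / sqrt (\<integral>\<omega>. (f (\<lambda>i. X \<omega> i + Z \<omega> i))\<^sup>2 \<partial>M)\<bar>
    \<le> sqrt (\<Sum>\<alpha>\<in>SD D. (kappa mX cX \<alpha>)\<^sup>2 / mfact \<alpha>)"
proof -
  obtain h where fH: "\<And>y. f y = (\<Sum>\<beta>\<in>SD D. h \<beta> * H \<beta> y)" using f_H[OF fD] by blast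
  have fA: "\<And>x z. f (\<lambda>i. x i + z i) = (\<Sum>\<beta>\<in>SD D. A D h \<beta> x * H \<beta> z)"
    by (rule f_A[OF fH])
  define E where "E = (\<integral>\<omega>. (f (\<lambda>i. X \<omega> i + Z \<omega> i))\<^sup>2 \<partial>M)"
  define N where "N = (\<integral>\<omega>. f (\<lambda>i. X \<omega> i + Z \<omega> i) * g (X \<omega>) \<partial>M)"
  define b where "b \<beta> = (\<integral>\<omega>. A D h \<beta> (X \<omega>) \<partial>M)" for \<beta>
  define Sk where "Sk = (\<Sum>\<alpha>\<in>SD D. (kappa mX cX \<alpha>)\<^sup>2 / mfact \<alpha>)"
  define G where "G = (\<Sum>\<beta>\<in>SD D. mfact \<beta> * (b \<beta>)\<^sup>2)"
  have N: "N = (\<Sum>\<beta>\<in>SD D. kappa mX cX \<beta> * b \<beta>)"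
    unfolding N_def b_def Efg[OF fA] EgA0 lin ..
  have E: "E = (\<Sum>\<beta>\<in>SD D. (\<integral>\<omega>. (A D h \<beta> (X \<omega>))\<^sup>2 \<partial>M) * mfact \<beta>)"
    unfolding E_def by (rule Ef2(2)[OF fA])
  have vb: "(b \<beta>)\<^sup>2 \<le> (\<integral>\<omega>. (A D h \<beta> (X \<omega>))\<^sup>2 \<partial>M)" for \<beta>
    unfolding b_def using intA intAA[of D h \<beta> \<beta>] by (intro var_ge) (auto simp: power2_eq_square)
  have GE: "G \<le> E"
    unfolding G_def E
  proof (rule sum_mono)
    fix \<beta> :: "'n \<Rightarrow> nat"
    show "mfact \<beta> * (b \<beta>)\<^sup>2 \<le> (\<integral>\<omega>. (A D h \<beta> (X \<omega>))\<^sup>2 \<partial>M) * mfact \<beta>"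
      using mult_left_mono[OF vb[of \<beta>] less_imp_le[OF mfact_pos[of \<beta>]]] by (simp add: mult.commute)
  qed
  have S0: "0 \<le> Sk" unfolding Sk_def
    by (intro sum_nonneg divide_nonneg_nonneg) simp_all
  have CS: "N\<^sup>2 \<le> Sk * G"
  proof -
    have eqN: "N = (\<Sum>\<beta>\<in>SD D. (kappa mX cX \<beta> / sqrt (mfact \<beta>)) * (sqrt (mfact \<beta>) * b \<beta>))"
      unfolding N by (intro sum.cong refl) simp
    have "N\<^sup>2 \<le> (\<Sum>\<beta>\<in>SD D. (kappa mX cX \<beta> / sqrt (mfact \<beta>))\<^sup>2) * (\<Sum>\<beta>\<in>SD D. (sqrt (mfact \<beta>) * b \<beta>)\<^sup>2)"
      unfolding eqN by (rule Cauchy_Schwarz_ineq_sum)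
    also have "(\<Sum>\<beta>\<in>SD D. (kappa mX cX \<beta> / sqrt (mfact \<beta>))\<^sup>2) = Sk"
      unfolding Sk_def by (intro sum.cong refl) (simp add: power_divide)
    also have "(\<Sum>\<beta>\<in>SD D. (sqrt (mfact \<beta>) * b \<beta>)\<^sup>2) = G"
      unfolding G_def by (intro sum.cong refl) (simp add: power_mult_distrib)
    finally show ?thesis .
  qed
  have E0: "0 < E"
  proof -
    have "0 \<le> E" unfolding E_def by simp
    moreover have "E \<noteq> 0" using ne unfolding E_def .
    ultimately show ?thesis by simp
  qed
  have "Sk * G \<le> Sk * E" using GE S0 by (rule mult_left_mono)
  with CS have NE: "N\<^sup>2 \<le> Sk * E" by (rule order_trans)
  have "\<bar>N\<bar> = sqrt (N\<^sup>2)" by simp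
  also have "\<dots> \<le> sqrt (Sk * E)" using NE by (rule real_sqrt_le_mono)
  also have "\<dots> = sqrt Sk * sqrt E" by (rule real_sqrt_mult)
  finally have "\<bar>N\<bar> \<le> sqrt Sk * sqrt E" .
  moreover have sE: "0 < sqrt E" using E0 by simp
  ultimately have "\<bar>N\<bar> / sqrt E \<le> sqrt Sk"
    by (subst pos_divide_le_eq[OF sE])
  moreover have "\<bar>N / sqrt E\<bar> = \<bar>N\<bar> / sqrt E" using sE by (rule abs_div_pos[symmetric])
  ultimately have "\<bar>N / sqrt E\<bar> \<le> sqrt Sk" by (simp only:)
  then show ?thesis unfolding N_def E_def Sk_def .
qed

end


theorem mainTheorem1:
  fixes M :: "'a measure"
    and X Z :: "'a \<Rightarrow> 'n::finite \<Rightarrow> real"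
    and g :: "('n \<Rightarrow> real) \<Rightarrow> real"
    and D :: nat
  assumes "prob_space M"
    and g_meas: "g \<in> borel_measurable (Pi\<^sub>M UNIV (\<lambda>_. borel))"
    and X_moments: "\<And>\<alpha>. integrable M (\<lambda>\<omega>. monom \<alpha> (X \<omega>))"
    and joint_moments: "\<And>(k::nat) \<alpha>. integrable M (\<lambda>\<omega>. g (X \<omega>) ^ k * monom \<alpha> (X \<omega>))"
    and Z_gauss: "\<And>i. distributed M lborel (\<lambda>\<omega>. Z \<omega> i) std_normal_density"
    and Z_iid: "prob_space.indep_vars M (\<lambda>_. borel) (\<lambda>i \<omega>. Z \<omega> i) UNIV"
    and XZ_indep: "prob_space.indep_var M (Pi\<^sub>M UNIV (\<lambda>_. borel)) X (Pi\<^sub>M UNIV (\<lambda>_. borel)) Z"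
  shows "(corr_le M (\<lambda>\<omega> i. X \<omega> i + Z \<omega> i) (\<lambda>\<omega>. g (X \<omega>)) D)\<^sup>2
    \<le> ereal (\<Sum>\<alpha>\<in>{\<alpha>. mdeg \<alpha> \<le> D}.
          (kappa (\<lambda>\<gamma>. \<integral>\<omega>. monom \<gamma> (X \<omega>) \<partial>M)
                 (\<lambda>\<gamma>. \<integral>\<omega>. g (X \<omega>) * monom \<gamma> (X \<omega>) \<partial>M) \<alpha>)\<^sup>2 / mfact \<alpha>)"
proof -
  interpret gsetting M X Z g
    by (intro gsetting.intro gsetting_axioms.intro assms)
  define Sk where "Sk = (\<Sum>\<alpha>\<in>SD D. (kappa mX cX \<alpha>)\<^sup>2 / mfact \<alpha>)"
  have S0: "0 \<le> Sk" unfolding Sk_def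
    by (intro sum_nonneg divide_nonneg_nonneg) simp_all
  define V where "V = {f\<in>polys_le D. (\<integral>\<omega>. (f (\<lambda>i. X \<omega> i + Z \<omega> i))\<^sup>2 \<partial>M) \<noteq> 0}"
  define v where "v f = ereal ((\<integral>\<omega>. f (\<lambda>i. X \<omega> i + Z \<omega> i) * g (X \<omega>) \<partial>M) / sqrt (\<integral>\<omega>. (f (\<lambda>i. X \<omega> i + Z \<omega> i))\<^sup>2 \<partial>M))" for f
  have c: "corr_le M (\<lambda>\<omega> i. X \<omega> i + Z \<omega> i) (\<lambda>\<omega>. g (X \<omega>)) D = (SUP f\<in>V. v f)"
    unfolding corr_le_def V_def v_def ..
  have vb: "- ereal (sqrt Sk) \<le> v f \<and> v f \<le> ereal (sqrt Sk)" if "f \<in> V" for f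
  proof -
    have fD: "f \<in> polys_le D" and ne: "(\<integral>\<omega>. (f (\<lambda>i. X \<omega> i + Z \<omega> i))\<^sup>2 \<partial>M) \<noteq> 0"
      using that unfolding V_def by auto
    have b: "\<bar>(\<integral>\<omega>. f (\<lambda>i. X \<omega> i + Z \<omega> i) * g (X \<omega>) \<partial>M) / sqrt (\<integral>\<omega>. (f (\<lambda>i. X \<omega> i + Z \<omega> i))\<^sup>2 \<partial>M)\<bar> \<le> sqrt Sk"
      using bound_f[OF fD ne] unfolding Sk_def .
    have "(\<integral>\<omega>. f (\<lambda>i. X \<omega> i + Z \<omega> i) * g (X \<omega>) \<partial>M) / sqrt (\<integral>\<omega>. (f (\<lambda>i. X \<omega> i + Z \<omega> i))\<^sup>2 \<partial>M) \<le> sqrt Sk"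
      using abs_le_D1[OF b] .
    moreover have "- sqrt Sk \<le> (\<integral>\<omega>. f (\<lambda>i. X \<omega> i + Z \<omega> i) * g (X \<omega>) \<partial>M) / sqrt (\<integral>\<omega>. (f (\<lambda>i. X \<omega> i + Z \<omega> i))\<^sup>2 \<partial>M)"
      using abs_le_D2[OF b] by linarith
    ultimately show ?thesis unfolding v_def by simp
  qed
  have one: "(\<lambda>y. 1) \<in> V"
  proof -
    have z: "(\<lambda>_::'n. 0::nat) \<in> SD D" by (simp add: mdeg_def)
    have s: "(\<Sum>\<alpha>\<in>SD D. (if \<alpha> = (\<lambda>_. 0) then 1 else 0) * monom \<alpha> y) = 1" for y :: "'n \<Rightarrow> real"
    proof -
      have "(\<Sum>\<alpha>\<in>SD D. (if \<alpha> = (\<lambda>_. 0) then 1 else 0) * monom \<alpha> y) = (\<Sum>\<alpha>\<in>(SD D :: ('n \<Rightarrow> nat) set). if \<alpha> = (\<lambda>_. 0) then (1::real) else 0)"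
        by (rule sum.cong) auto
      also have "\<dots> = 1" by (simp only: sum.delta[OF finite_SD] z if_True)
      finally show ?thesis .
    qed
    have "(\<lambda>y::'n \<Rightarrow> real. 1::real) \<in> polys_le D" unfolding polys_le_def
      by (intro CollectI exI[of _ "\<lambda>\<alpha>. if \<alpha> = (\<lambda>_. 0) then 1 else (0::real)"] allI) (simp only: s)
    then show ?thesis unfolding V_def by (simp add: prob_space)
  qed
  have up: "(SUP f\<in>V. v f) \<le> ereal (sqrt Sk)"
    using vb by (intro SUP_least) auto
  have lo: "- ereal (sqrt Sk) \<le> (SUP f\<in>V. v f)"
    by (rule order_trans[OF conjunct1[OF vb[OF one]] SUP_upper[OF one, of v]])
  have "(SUP f\<in>V. v f)\<^sup>2 \<le> ereal ((sqrt Sk)\<^sup>2)"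
    by (rule ereal_sq_bound[OF lo up])
  then show ?thesis unfolding c using S0 by (simp add: Sk_def mX_def[abs_def] cX_def[abs_def])
qed


end
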